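(* Let $d\ge 1$ and let $k=G_\ell:\mathbb{R}^d\to\mathbb{R}$ be the squared-exponential kernel $G_\ell(x)=\exp\!\left(-\frac{|x|^2}{2\ell^2}\right)$, with length scale $0<\ell\le 2/\sqrt{\pi}$. Let $0<h<1$. Then for every $x\in[-1,1]^d$, \[ \Biggl|\sum_{n\in\mathbb{Z}^d,\ n\neq \mathbf{0}} k\!\left(x+\frac{n}{h}\right)\Biggr| \;\le\; 2d\,3^d\,e^{-\frac12\left(\frac{h^{-1}-1}{\ell}\right)^2}. \] Moreover, for every $m\in\mathbb{N}$ and every $x\in\mathbb{R}^d$, \[ \Biggl| h^d\sum_{j\in\mathbb{Z}^d,\ j\notin J_m} \hat k(jh)\,e^{2\pi i h\langle j,x\rangle}\Biggr| \;\le\; 2d\,4^d\,e^{-2(\pi\ell h m)^2}. \]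
   Context: $|\cdot|$ denotes the Euclidean norm and $\langle\cdot,\cdot\rangle$ the Euclidean inner product on $\mathbb{R}^d$. The Fourier transform convention is $\hat k(\xi)=\int_{\mathbb{R}^d} k(x)e^{-2\pi i\langle \xi,x\rangle}\,dx$ for $\xi\in\mathbb{R}^d$ (so that $\hat G_\ell(\xi)=(\sqrt{2\pi}\ell)^d e^{-2|\pi\ell\xi|^2}$). For $m\in\mathbb{N}$, $J_m=\{-m,-m+1,\dots,m\}^d\subset\mathbb{Z}^d$. *)

theory Defs
  imports "HOL-Analysis.Analysis"
begin

definition sq_exp_kernel :: "real \<Rightarrow> real ^ 'n \<Rightarrow> real" where
  "sq_exp_kernel l x = exp (- ((norm x)^2 / (2 * l^2)))"

definition fourier_tr :: "(real ^ 'n \<Rightarrow> real) \<Rightarrow> real ^ 'n \<Rightarrow> complex" where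
  "fourier_tr k \<xi> = integral UNIV (\<lambda>x. complex_of_real (k x) * exp (- 2 * pi * \<i> * complex_of_real (\<xi> \<bullet> x)))"

definition lat :: "int ^ 'n \<Rightarrow> real ^ 'n" where
  "lat n = (\<chi> i. real_of_int (n $ i))"

definition Jset :: "nat \<Rightarrow> (int ^ 'n) set" where
  "Jset m = {j. \<forall>i. \<bar>j $ i\<bar> \<le> int m}"

end

theory Submission
  imports Defs "HOL-Probability.Characteristic_Functions"
begin

definition T8 :: "real \<Rightarrow> real" where
  "T8 v = 1 + v + v^2/2 + v^3/6 + v^4/24 + v^5/120 + v^6/720 + v^7/5040 + v^8/40320"
lemma T8_sum: "T8 v = (\<Sum>n<9. v^n /\<^sub>R fact n)"
  by (simp add: T8_def lessThan_nat_numeral fact_numeral)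
lemma grid_num_T8:
  assumes "k \<le> (7::nat)"
  shows "(\<Sum>n<4. 1 / T8 (25 * real (k + 8*n)^2 / 4096)) + (\<Sum>n<4. 1 / T8 (25 * real (7 - k + 8*n)^2 / 4096)) \<le> 2.995"
proof -
  have "k = 0 \<or> k = 1 \<or> k = 2 \<or> k = 3 \<or> k = 4 \<or> k = 5 \<or> k = 6 \<or> k = 7" using assms by auto
  then show ?thesis
    by (elim disjE) (simp_all add: T8_def power_divide lessThan_nat_numeral)
qed

lemma int_two_sided:
  fixes g :: "int \<Rightarrow> real"
  assumes nn: "\<And>k. 0 \<le> g k" and pq: "q < p"
    and s1: "summable (\<lambda>n. g (p + int n))" and s2: "summable (\<lambda>n. g (q - int n))"
  shows "(g has_sum ((\<Sum>n. g (p + int n)) + (\<Sum>n. g (q - int n)))) ({p..} \<union> {..q})"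
proof -
  have i1: "inj (\<lambda>n::nat. p + int n)" by (auto simp: inj_def)
  have i2: "inj (\<lambda>n::nat. q - int n)" by (auto simp: inj_def)
  have r1: "range (\<lambda>n::nat. p + int n) = {p..}"
  proof (auto)
    fix k assume "p \<le> k"
    then show "k \<in> range (\<lambda>n::nat. p + int n)" by (intro image_eqI[of _ _ "nat (k - p)"]) auto
  qed
  have r2: "range (\<lambda>n::nat. q - int n) = {..q}"
  proof (auto)
    fix k assume "k \<le> q"
    then show "k \<in> range (\<lambda>n::nat. q - int n)" by (intro image_eqI[of _ _ "nat (q - k)"]) auto
  qed
  have h1: "(g has_sum (\<Sum>n. g (p + int n))) {p..}"
    unfolding r1[symmetric] has_sum_reindex[OF i1] o_def
    by (intro sums_nonneg_imp_has_sum summable_sums s1 nn)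
  have h2: "(g has_sum (\<Sum>n. g (q - int n))) {..q}"
    unfolding r2[symmetric] has_sum_reindex[OF i2] o_def
    by (intro sums_nonneg_imp_has_sum summable_sums s2 nn)
  show ?thesis using pq by (intro has_sum_Un_disjoint h1 h2) auto
qed

lemma geom_dom:
  fixes f :: "nat \<Rightarrow> real"
  assumes "\<And>n. 0 \<le> f n" "\<And>n. f n \<le> A * r^n" "0 \<le> r" "r < 1"
  shows "summable f" "suminf f \<le> A / (1 - r)"
proof -
  have sg: "summable (\<lambda>n. A * r^n)" using assms by (intro summable_mult summable_geometric) auto
  show "summable f" by (rule summable_comparison_test'[OF sg]) (use assms in auto)
  have "suminf f \<le> (\<Sum>n. A * r^n)" by (rule suminf_le) (use assms sg \<open>summable f\<close> in auto)
  also have "\<dots> = A / (1 - r)" using assms by (simp add: suminf_mult suminf_geometric divide_simps)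
  finally show "suminf f \<le> A / (1 - r)" .
qed


lemma T8_le_exp: assumes "0 \<le> v" shows "T8 v \<le> exp v"
proof -
  have "T8 v = (\<Sum>n<9. v^n /\<^sub>R fact n)"
    by (rule T8_sum)
  also have "\<dots> \<le> (\<Sum>n. v^n /\<^sub>R fact n)"
    by (rule sum_le_suminf) (use assms summable_exp_generic[of v] in auto)
  also have "\<dots> = exp v" by (simp add: exp_def)
  finally show ?thesis .
qed

lemma exp_neg_le_T8: assumes "0 \<le> v" shows "exp (- v) \<le> 1 / T8 v"
proof -
  have p: "0 < T8 v" using assms unfolding T8_def by (intro add_pos_nonneg) auto
  have "exp (- v) = 1 / exp v" by (simp add: exp_minus divide_inverse)
  also have "\<dots> \<le> 1 / T8 v" using p T8_le_exp[OF assms] by (intro divide_left_mono) auto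
  finally show ?thesis .
qed

lemma std_gauss_char:
  fixes th :: real
  shows "integrable lborel (\<lambda>x. std_normal_density x *\<^sub>R iexp (th * x))"
    and "(LINT x|lborel. std_normal_density x *\<^sub>R iexp (th * x)) = complex_of_real (exp (- (th^2) / 2))"
proof -
  interpret real_distribution std_normal_distribution by (rule real_dist_normal_dist)
  have i: "integrable std_normal_distribution (\<lambda>x. iexp (th * x))"
    by (rule integrable_iexp) auto
  show "integrable lborel (\<lambda>x. std_normal_density x *\<^sub>R iexp (th * x))"
    using i by (subst (asm) integrable_density) (auto simp: normal_density_nonneg)
  have "char std_normal_distribution th = complex_of_real (exp (- (th^2) / 2))"
    by (simp add: char_std_normal_distribution)
  then show "(LINT x|lborel. std_normal_density x *\<^sub>R iexp (th * x)) = complex_of_real (exp (- (th^2) / 2))"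
    unfolding char_def by (subst (asm) integral_density) (auto simp: normal_density_nonneg)
qed

lemma gauss_ft_1d:
  fixes l s :: real
  assumes l: "l > 0"
  defines "f \<equiv> (\<lambda>t. complex_of_real (exp (- (t^2 / (2*l^2)))) * exp (- 2 * pi * \<i> * complex_of_real (s * t)))"
  shows "integrable lborel f"
    and "integral\<^sup>L lborel f = complex_of_real (sqrt (2*pi) * l * exp (- 2 * pi^2 * l^2 * s^2))"
proof -
  define th where "th = - 2 * pi * s * l"
  have eq: "f (0 + l * x) = sqrt (2*pi) *\<^sub>R (std_normal_density x *\<^sub>R iexp (th * x))" for x
  proof -
    have "exp (- ((l*x)^2 / (2*l^2))) = exp (- (x\<^sup>2) / 2)" using l by (simp add: power_mult_distrib)
    moreover have "- 2 * pi * \<i> * complex_of_real (s * (l*x)) = \<i> * complex_of_real (th * x)"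
      by (simp add: th_def algebra_simps)
    ultimately show ?thesis unfolding f_def std_normal_density_def
      by (simp add: scaleR_conv_of_real)
  qed
  have fi: "integrable lborel (\<lambda>x. f (0 + l * x))"
    unfolding eq by (intro integrable_scaleR_right std_gauss_char(1))
  then show "integrable lborel f"
    using lborel_integrable_real_affine_iff[of l f 0] l by simp
  have "integral\<^sup>L lborel f = \<bar>l\<bar> *\<^sub>R (LINT x|lborel. f (0 + l * x))"
    using l by (intro lborel_integral_real_affine) simp
  also have "\<dots> = l *\<^sub>R (sqrt (2*pi) *\<^sub>R complex_of_real (exp (- (th^2) / 2)))"
    unfolding eq integral_scaleR_right std_gauss_char(2) using l by simp
  moreover have "th^2 / 2 = 2 * pi^2 * l^2 * s^2" by (simp add: th_def power_mult_distrib)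
  ultimately show "integral\<^sup>L lborel f = complex_of_real (sqrt (2*pi) * l * exp (- 2 * pi^2 * l^2 * s^2))"
    by (simp add: scaleR_conv_of_real)
qed

lemma lborel_prod_integral:
  fixes h :: "'a::euclidean_space \<Rightarrow> real \<Rightarrow> complex"
  assumes int: "\<And>b. b \<in> Basis \<Longrightarrow> integrable lborel (h b)"
  shows "integrable lborel (\<lambda>x::'a. \<Prod>b\<in>Basis. h b (x \<bullet> b))"
    and "(LINT x|lborel. (\<Prod>b\<in>Basis. h b (x \<bullet> b))) = (\<Prod>b\<in>Basis. integral\<^sup>L lborel (h b))"
proof -
  interpret product_sigma_finite "\<lambda>_::'a. lborel" by standard
  define T where "T = (\<lambda>f. \<Sum>b\<in>(Basis::'a set). f b *\<^sub>R b)"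
  have Tm: "T \<in> measurable (\<Pi>\<^sub>M b\<in>Basis. lborel) borel"
    unfolding T_def by measurable
  have hm: "h b \<in> borel_measurable borel" if "b \<in> Basis" for b
    using int[OF that] by (simp add: borel_measurable_integrable)
  have Fm: "(\<lambda>x::'a. \<Prod>b\<in>Basis. h b (x \<bullet> b)) \<in> borel_measurable borel"
    by (intro borel_measurable_prod measurable_compose[OF _ hm]) auto
  have TB: "T f \<bullet> b = f b" if "b \<in> Basis" for f b
    unfolding T_def using that by (simp add: inner_sum_left inner_Basis if_distrib cong: if_cong)
  have comp: "(\<Prod>b\<in>Basis. h b (T f \<bullet> b)) = (\<Prod>b\<in>Basis. h b (f b))" for f
    by (intro prod.cong refl) (simp add: TB)
  have pint: "integrable (\<Pi>\<^sub>M b\<in>Basis. lborel) (\<lambda>f. \<Prod>b\<in>Basis. h b (f b))"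
    by (intro product_integrable_prod int) auto
  show "integrable lborel (\<lambda>x::'a. \<Prod>b\<in>Basis. h b (x \<bullet> b))"
    apply (subst lborel_eq)
    apply (subst integrable_distr_eq[OF Tm[unfolded T_def] Fm])
    using pint comp unfolding T_def by simp
  have "(LINT x|lborel. (\<Prod>b\<in>Basis. h b (x \<bullet> b))) = (LINT f|(\<Pi>\<^sub>M b\<in>Basis. lborel). (\<Prod>b\<in>Basis. h b (T f \<bullet> b)))"
    apply (subst lborel_eq)
    apply (subst integral_distr[OF Tm[unfolded T_def] Fm])
    unfolding T_def by simp
  also have "\<dots> = (\<Prod>b\<in>Basis. integral\<^sup>L lborel (h b))"
    unfolding comp by (intro product_integral_prod int) auto
  finally show "(LINT x|lborel. (\<Prod>b\<in>Basis. h b (x \<bullet> b))) = (\<Prod>b\<in>Basis. integral\<^sup>L lborel (h b))" .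
qed

lemma fourier_sq_exp:
  fixes \<xi> :: "real ^ 'n"
  assumes l: "l > 0"
  shows "fourier_tr (sq_exp_kernel l) \<xi> =
     complex_of_real ((sqrt (2*pi) * l) ^ CARD('n) * exp (- 2 * pi^2 * l^2 * (norm \<xi>)^2))"
proof -
  define h where "h = (\<lambda>(b::real^'n) t. complex_of_real (exp (- (t^2 / (2*l^2)))) * exp (- 2 * pi * \<i> * complex_of_real ((\<xi> \<bullet> b) * t)))"
  have hi: "integrable lborel (h b)" for b
    unfolding h_def using gauss_ft_1d(1)[OF l] by blast
  have hv: "integral\<^sup>L lborel (h b) = complex_of_real (sqrt (2*pi) * l * exp (- 2 * pi^2 * l^2 * (\<xi> \<bullet> b)^2))" for b
    unfolding h_def using gauss_ft_1d(2)[OF l] by blast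
  have feq: "complex_of_real (sq_exp_kernel l x) * exp (- 2 * pi * \<i> * complex_of_real (\<xi> \<bullet> x))
      = (\<Prod>b\<in>Basis. h b (x \<bullet> b))" for x :: "real^'n"
  proof -
    have n2: "(norm x)^2 = (\<Sum>b\<in>Basis. (x \<bullet> b)^2)"
      using euclidean_inner[of x x] power2_norm_eq_inner[of x] by (simp add: power2_eq_square)
    have k: "sq_exp_kernel l x = (\<Prod>b\<in>Basis. exp (- ((x \<bullet> b)^2 / (2*l^2))))"
      unfolding sq_exp_kernel_def n2 by (simp add: exp_sum[symmetric] sum_divide_distrib sum_negf)
    have e: "exp (- 2 * pi * \<i> * complex_of_real (\<xi> \<bullet> x)) =
       (\<Prod>b\<in>Basis. exp (- 2 * pi * \<i> * complex_of_real ((\<xi> \<bullet> b) * (x \<bullet> b))))"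
      by (simp add: exp_sum[symmetric] euclidean_inner[of \<xi> x] sum_distrib_left)
    show ?thesis unfolding k e h_def by (simp add: prod.distrib)
  qed
  have "fourier_tr (sq_exp_kernel l) \<xi> = integral UNIV (\<lambda>x::real^'n. \<Prod>b\<in>Basis. h b (x \<bullet> b))"
    unfolding fourier_tr_def feq ..
  also have "\<dots> = (LINT x|lborel. (\<Prod>b\<in>Basis. h b (x \<bullet> b)))"
    by (intro integral_unique has_integral_integral_lborel lborel_prod_integral(1) hi)
  also have "\<dots> = (\<Prod>b\<in>Basis. integral\<^sup>L lborel (h b))"
    by (intro lborel_prod_integral(2) hi)
  also have "\<dots> = complex_of_real (\<Prod>b\<in>(Basis::(real^'n) set). sqrt (2*pi) * l * exp (- 2 * pi^2 * l^2 * (\<xi> \<bullet> b)^2))"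
    unfolding hv by simp
  also have "(\<Prod>b\<in>(Basis::(real^'n) set). sqrt (2*pi) * l * exp (- 2 * pi^2 * l^2 * (\<xi> \<bullet> b)^2))
      = (sqrt (2*pi) * l) ^ CARD('n) * exp (- 2 * pi^2 * l^2 * (norm \<xi>)^2)"
  proof -
    have n2: "(norm \<xi>)^2 = (\<Sum>b\<in>Basis. (\<xi> \<bullet> b)^2)"
      using euclidean_inner[of \<xi> \<xi>] power2_norm_eq_inner[of \<xi>] by (simp add: power2_eq_square)
    show ?thesis unfolding n2
      by (simp add: prod.distrib exp_sum[symmetric] sum_distrib_left)
  qed
  finally show ?thesis .
qed

lemma bij_vec_nth: "bij_betw (vec_nth :: 'a^'n \<Rightarrow> ('n \<Rightarrow> 'a)) UNIV (PiE UNIV (\<lambda>_. UNIV))"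
proof -
  have "PiE UNIV (\<lambda>_. UNIV) = (UNIV :: ('n \<Rightarrow> 'a) set)" by (auto simp: PiE_def extensional_def)
  moreover have "bij (vec_nth :: 'a^'n \<Rightarrow> ('n \<Rightarrow> 'a))"
    by (rule bijI) (auto simp: inj_def vec_eq_iff surj_def, metis vec_lambda_inverse UNIV_I)
  ultimately show ?thesis by simp
qed

lemma has_sum_finsum:
  fixes f :: "'i \<Rightarrow> 'a \<Rightarrow> 'b::{topological_comm_monoid_add}"
  shows "finite I \<Longrightarrow> (\<And>i. i \<in> I \<Longrightarrow> (f i has_sum s i) A) \<Longrightarrow> ((\<lambda>x. \<Sum>i\<in>I. f i x) has_sum (\<Sum>i\<in>I. s i)) A"
  by (induction I rule: finite_induct) (auto intro: has_sum_add has_sum_0)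

lemma prod_vec_sum:
  fixes f :: "'n::finite \<Rightarrow> int \<Rightarrow> real"
  assumes nn: "\<And>i k. 0 \<le> f i k" and sm: "\<And>i. f i summable_on UNIV"
  shows "(\<lambda>n::int^'n. \<Prod>i\<in>UNIV. f i (n$i)) summable_on UNIV"
    and "infsum (\<lambda>n::int^'n. \<Prod>i\<in>UNIV. f i (n$i)) UNIV = (\<Prod>i\<in>UNIV. infsum (f i) UNIV)"
proof -
  have ab: "(\<lambda>k. norm (f i k)) summable_on UNIV" for i
  proof -
    have "(\<lambda>k. norm (f i k)) = f i" using nn by (auto simp: fun_eq_iff)
    then show ?thesis using sm[of i] by simp
  qed
  have ab2: "Infinite_Set_Sum.abs_summable_on (f i) UNIV" for i
    using ab[of i] abs_summable_equivalent by blast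
  have "Infinite_Set_Sum.abs_summable_on (\<lambda>g. \<Prod>i\<in>UNIV. f i (g i)) (PiE UNIV (\<lambda>_. UNIV))"
    by (rule abs_summable_on_prod_PiE) (auto intro: ab2)
  then have "(\<lambda>g. norm (\<Prod>i\<in>UNIV. f i (g i))) summable_on PiE UNIV (\<lambda>_. UNIV)"
    using abs_summable_equivalent[of "(\<lambda>g. \<Prod>i\<in>UNIV. f i (g i))" "PiE UNIV (\<lambda>_. UNIV)"] by blast
  then have s1: "(\<lambda>g. \<Prod>i\<in>UNIV. f i (g i)) summable_on PiE UNIV (\<lambda>_. UNIV)"
    by (rule abs_summable_summable)
  show "(\<lambda>n::int^'n. \<Prod>i\<in>UNIV. f i (n$i)) summable_on UNIV"
    using summable_on_reindex_bij_betw[OF bij_vec_nth, of "\<lambda>g. \<Prod>i\<in>UNIV. f i (g i)"] s1 by simp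
  have "infsum (\<lambda>n::int^'n. \<Prod>i\<in>UNIV. f i (n$i)) UNIV = infsum (\<lambda>g. \<Prod>i\<in>UNIV. f i (g i)) (PiE UNIV (\<lambda>_. UNIV))"
    using infsum_reindex_bij_betw[OF bij_vec_nth, of "\<lambda>g. \<Prod>i\<in>UNIV. f i (g i)"] by simp
  also have "\<dots> = (\<Prod>i\<in>UNIV. infsum (f i) UNIV)"
    by (rule infsum_prod_PiE_abs) (simp_all add: ab[simplified])
  finally show "infsum (\<lambda>n::int^'n. \<Prod>i\<in>UNIV. f i (n$i)) UNIV = (\<Prod>i\<in>UNIV. infsum (f i) UNIV)" .
qed

lemma prod_vec_cover:
  fixes f :: "'n::finite \<Rightarrow> int \<Rightarrow> real" and B :: "int set"
  assumes nn: "\<And>i k. 0 \<le> f i k" and sm: "\<And>i. f i summable_on UNIV"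
    and tau: "\<And>i. infsum (f i) B \<le> \<tau>" and phi: "\<And>i. infsum (f i) UNIV \<le> \<phi>"
  shows "(\<lambda>n::int^'n. \<Prod>i\<in>UNIV. f i (n$i)) summable_on S"
    and "infsum (\<lambda>n::int^'n. \<Prod>i\<in>UNIV. f i (n$i)) {n. \<exists>i. n$i \<in> B}
          \<le> real CARD('n) * \<tau> * \<phi> ^ (CARD('n) - 1)"
proof -
  define G where "G = (\<lambda>n::int^'n. \<Prod>i\<in>UNIV. f i (n$i))"
  have Gs: "G summable_on UNIV" unfolding G_def by (rule prod_vec_sum(1)[OF nn sm])
  have Gnn: "0 \<le> G n" for n unfolding G_def by (intro prod_nonneg) (auto intro: nn)
  show "(\<lambda>n::int^'n. \<Prod>i\<in>UNIV. f i (n$i)) summable_on S"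
    using summable_on_subset_banach[OF Gs] unfolding G_def by blast
  define H where "H = (\<lambda>i (n::int^'n). if n$i \<in> B then G n else 0)"
  have Hs: "H i summable_on UNIV" for i
    by (rule summable_on_comparison_test[OF Gs]) (auto simp: H_def Gnn)
  define f' where "f' = (\<lambda>i j k. if j = i then (if k \<in> B then f i k else 0) else f j k)"
  have f'nn: "0 \<le> f' i j k" for i j k unfolding f'_def by (auto intro: nn)
  have f's: "f' i j summable_on UNIV" for i j
  proof (cases "j = i")
    case True
    then show ?thesis unfolding f'_def
      by (auto intro!: summable_on_comparison_test[OF sm[of i]] simp: nn)
  qed (simp add: f'_def sm)
  have Heq: "H i n = (\<Prod>j\<in>UNIV. f' i j (n$j))" for i n
  proof -
    have 1: "(\<Prod>j\<in>UNIV. f' i j (n$j)) = f' i i (n$i) * (\<Prod>j\<in>UNIV-{i}. f' i j (n$j))"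
      by (rule prod.remove) simp_all
    have 2: "(\<Prod>j\<in>UNIV-{i}. f' i j (n$j)) = (\<Prod>j\<in>UNIV-{i}. f j (n$j))"
      by (intro prod.cong) (auto simp: f'_def)
    have 3: "G n = f i (n$i) * (\<Prod>j\<in>UNIV-{i}. f j (n$j))"
      unfolding G_def by (rule prod.remove) simp_all
    show ?thesis unfolding 1 2 by (simp add: H_def 3 f'_def)
  qed
  have phi0: "0 \<le> \<phi>" using phi[of undefined] infsum_nonneg[of UNIV "f undefined"] nn by (meson order.trans)
  have Hv: "infsum (H i) UNIV \<le> \<tau> * \<phi> ^ (CARD('n) - 1)" for i
  proof -
    have "infsum (H i) UNIV = (\<Prod>j\<in>UNIV. infsum (f' i j) UNIV)"
      unfolding Heq by (rule prod_vec_sum(2)[OF f'nn f's])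
    also have "\<dots> = infsum (f' i i) UNIV * (\<Prod>j\<in>UNIV-{i}. infsum (f' i j) UNIV)"
      by (rule prod.remove) simp_all
    also have "infsum (f' i i) UNIV = infsum (f i) B"
      by (rule infsum_cong_neutral) (auto simp: f'_def)
    also have "(\<Prod>j\<in>UNIV-{i}. infsum (f' i j) UNIV) = (\<Prod>j\<in>UNIV-{i}. infsum (f j) UNIV)"
      by (intro prod.cong) (auto simp: f'_def)
    also have "infsum (f i) B * (\<Prod>j\<in>UNIV-{i}. infsum (f j) UNIV) \<le> \<tau> * (\<Prod>j\<in>UNIV-{i}. \<phi>)"
      by (intro mult_mono tau prod_mono conjI phi infsum_nonneg nn prod_nonneg) (auto intro: order.trans[OF _ tau] infsum_nonneg nn)
    also have "(\<Prod>j\<in>UNIV-{i}. \<phi>) = \<phi> ^ (CARD('n) - 1)"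
      by (simp add: card_Diff_singleton)
    finally show ?thesis .
  qed
  have "infsum G {n. \<exists>i. n$i \<in> B} = infsum (\<lambda>n. if \<exists>i. n$i \<in> B then G n else 0) UNIV"
    by (rule infsum_cong_neutral) auto
  also have "\<dots> \<le> infsum (\<lambda>n. \<Sum>i\<in>UNIV. H i n) UNIV"
  proof (rule infsum_mono)
    show "(\<lambda>n. if \<exists>i. n$i \<in> B then G n else 0) summable_on UNIV"
      by (rule summable_on_comparison_test[OF Gs]) (auto simp: Gnn)
    show "(\<lambda>n. \<Sum>i\<in>UNIV. H i n) summable_on UNIV"
      using has_sum_finsum[where I=UNIV and f=H and s="\<lambda>i. infsum (H i) UNIV" and A=UNIV, simplified] Hs
      by (auto simp: summable_on_def intro: has_sum_infsum)
    fix n :: "int^'n"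
    show "(if \<exists>i. n$i \<in> B then G n else 0) \<le> (\<Sum>i\<in>UNIV. H i n)"
    proof (cases "\<exists>i. n$i \<in> B")
      case True
      then obtain i where i: "n$i \<in> B" by blast
      have "G n = H i n" using i by (simp add: H_def)
      also have "\<dots> \<le> (\<Sum>i\<in>UNIV. H i n)"
        by (rule member_le_sum) (auto simp: H_def Gnn)
      finally show ?thesis using True by simp
    qed (auto intro: sum_nonneg simp: H_def Gnn)
  qed
  also have "\<dots> = (\<Sum>i\<in>UNIV. infsum (H i) UNIV)"
    using has_sum_finsum[where I=UNIV and f=H and s="\<lambda>i. infsum (H i) UNIV" and A=UNIV, simplified] Hs
    by (auto intro: infsumI has_sum_infsum)
  also have "\<dots> \<le> (\<Sum>i\<in>(UNIV::'n set). \<tau> * \<phi> ^ (CARD('n) - 1))"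
    by (intro sum_mono Hv)
  also have "\<dots> = real CARD('n) * \<tau> * \<phi> ^ (CARD('n) - 1)" by simp
  finally show "infsum (\<lambda>n::int^'n. \<Prod>i\<in>UNIV. f i (n$i)) {n. \<exists>i. n$i \<in> B}
          \<le> real CARD('n) * \<tau> * \<phi> ^ (CARD('n) - 1)" unfolding G_def .
qed

definition U :: "real \<Rightarrow> real" where "U t = exp (- (25/64) * t^2)"

lemma U_mono: assumes "0 \<le> s" "s \<le> t" shows "U t \<le> U s"
  unfolding U_def using assms by (simp add: power_mono)

lemma U_grid:
  assumes "k \<le> (7::nat)"
  shows "(\<Sum>n<4. U (real k / 8 + real n)) + (\<Sum>n<4. U (real (7 - k) / 8 + real n)) \<le> 2.995"
proof -
  have e: "U (real j / 8 + real n) = exp (- (25 * real (j + 8*n)^2 / 4096))" for j n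
    unfolding U_def by (simp add: power2_eq_square field_simps)
  have "(\<Sum>n<4. U (real k / 8 + real n)) + (\<Sum>n<4. U (real (7 - k) / 8 + real n))
     \<le> (\<Sum>n<4. 1 / T8 (25 * real (k + 8*n)^2 / 4096)) + (\<Sum>n<4. 1 / T8 (25 * real (7 - k + 8*n)^2 / 4096))"
    unfolding e by (intro add_mono sum_mono exp_neg_le_T8) auto
  also have "\<dots> \<le> 2.995" by (rule grid_num_T8[OF assms])
  finally show ?thesis .
qed

lemma U_grid2:
  assumes "0 \<le> a" "0 \<le> b" "1 \<le> a + b"
  shows "(\<Sum>n<4. U (a + real n)) + (\<Sum>n<4. U (b + real n)) \<le> 2.995"
proof -
  obtain k :: nat where k: "k \<le> 7" "real k / 8 \<le> a" "real (7 - k) / 8 \<le> b"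
  proof (cases "7/8 \<le> a")
    case True
    then show ?thesis using that[of 7] assms by auto
  next
    case False
    define k where "k = nat \<lfloor>8 * a\<rfloor>"
    have k1: "real k \<le> 8 * a" unfolding k_def using assms(1) by simp
    have k2: "8 * a < real k + 1" unfolding k_def using assms(1) by linarith
    have k3: "k \<le> 6" using False k1 k2 unfolding k_def by linarith
    have "real (7 - k) = 7 - real k" using k3 by simp
    then show ?thesis using that[of k] k1 k2 k3 assms by auto
  qed
  have "(\<Sum>n<4. U (a + real n)) + (\<Sum>n<4. U (b + real n))
     \<le> (\<Sum>n<4. U (real k / 8 + real n)) + (\<Sum>n<4. U (real (7 - k) / 8 + real n))"
    using k by (intro add_mono sum_mono U_mono) auto
  also have "\<dots> \<le> 2.995" by (rule U_grid[OF k(1)])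
  finally show ?thesis .
qed

lemma half_sum:
  assumes c: "25/64 \<le> c" and h: "0 < h" "h \<le> 1" and t: "0 \<le> t"
  shows "summable (\<lambda>n. exp (- c * (t + real n / h)^2))"
    and "(\<Sum>n. exp (- c * (t + real n / h)^2)) \<le> (\<Sum>n<4. U (t + real n)) + 0.0025"
proof -
  define e where "e = (\<lambda>n::nat. exp (- c * (t + real n / h)^2))"
  have le: "e n \<le> U (t + real n)" for n
  proof -
    have "h * real n \<le> real n" by (rule mult_left_le_one_le) (use h in auto)
    then have "real n \<le> real n / h" using h by (simp add: field_simps)
    then have "(t + real n)^2 \<le> (t + real n / h)^2" using t by (intro power_mono) auto
    then have "(25/64) * (t + real n)^2 \<le> c * (t + real n / h)^2"
      using c by (intro mult_mono) auto
    then show ?thesis unfolding e_def U_def by simp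
  qed
  define A :: real where "A = exp (- (25/4))"
  define r :: real where "r = exp (- (25/8))"
  have tl: "e (n + 4) \<le> A * r^n" for n
  proof -
    have "(16 + 8 * real n) \<le> (t + real (n+4))^2"
    proof -
      have "(16 + 8 * real n) \<le> (real n + 4)^2" by (simp add: power2_eq_square algebra_simps)
      also have "\<dots> \<le> (t + real (n+4))^2" using t by (intro power_mono) auto
      finally show ?thesis .
    qed
    then have "U (t + real (n + 4)) \<le> exp (- (25/4) - (25/8) * real n)"
      unfolding U_def by simp
    also have "\<dots> = A * r^n" unfolding A_def r_def by (simp add: exp_add[symmetric] exp_of_nat_mult[symmetric] algebra_simps)
    finally show ?thesis using le[of "n+4"] by simp
  qed
  have r1: "r < 1" "0 \<le> r" unfolding r_def by auto
  have g: "summable (\<lambda>n. e (n + 4))" "(\<Sum>n. e (n + 4)) \<le> A / (1 - r)"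
    using geom_dom[of "\<lambda>n. e (n + 4)" A r] tl r1 by (auto simp: e_def)
  show se: "summable (\<lambda>n. exp (- c * (t + real n / h)^2))"
    using g(1) unfolding e_def by (subst (asm) summable_iff_shift) 
  have Ar: "A / (1 - r) \<le> 0.0025"
  proof -
    have A1: "A \<le> 1 / T8 (25/4)" unfolding A_def by (rule exp_neg_le_T8) simp
    have r2: "r \<le> 1 / T8 (25/8)" unfolding r_def by (rule exp_neg_le_T8) simp
    have "A / (1 - r) \<le> (1 / T8 (25/4)) / (1 - 1 / T8 (25/8))"
    proof (rule frac_le)
      show "0 \<le> 1 / T8 (25/4)" by (simp add: T8_def)
      show "0 < 1 - 1 / T8 (25 / 8)" by (simp add: T8_def power_divide)
      show "1 - 1 / T8 (25 / 8) \<le> 1 - r" using r2 by simp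
    qed (use A1 in simp)
    also have "\<dots> \<le> 0.0025" by (simp add: T8_def power_divide)
    finally show ?thesis .
  qed
  have "(\<Sum>n. e n) = (\<Sum>n. e (n + 4)) + (\<Sum>i<4. e i)"
    by (rule suminf_split_initial_segment) (use se in \<open>simp add: e_def\<close>)
  also have "\<dots> \<le> 0.0025 + (\<Sum>n<4. U (t + real n))"
    using order.trans[OF g(2) Ar] by (intro add_mono sum_mono le) auto
  finally show "(\<Sum>n. exp (- c * (t + real n / h)^2)) \<le> (\<Sum>n<4. U (t + real n)) + 0.0025"
    unfolding e_def by simp
qed

lemma v_sum:
  shows "summable (\<lambda>n::nat. exp (- (25/64) * real n ^ 2))"
    and "(\<Sum>n. exp (- (25/64) * real n ^ 2)) \<le> 3"
proof -
  define A :: real where "A = exp (25/64)"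
  define r :: real where "r = exp (- (25/32))"
  have d: "exp (- (25/64) * real n ^ 2) \<le> A * r^n" for n
  proof -
    have "2 * real n - 1 \<le> real n ^ 2"
      using zero_le_power2[of "real n - 1"] by (simp add: power2_eq_square algebra_simps)
    then have "- (25/64) * real n ^ 2 \<le> 25/64 + (- (25/32)) * real n" by simp
    then have "exp (- (25/64) * real n ^ 2) \<le> exp (25/64 + (- (25/32)) * real n)" by simp
    also have "\<dots> = A * r^n"
    proof -
      have "exp (- (25/32) * real n) = exp (- (25/32)) ^ n" by (metis exp_of_nat_mult mult.commute)
      then show ?thesis unfolding A_def r_def exp_add by simp
    qed
    finally show ?thesis .
  qed
  have r1: "r < 1" "0 \<le> r" unfolding r_def by auto
  have g: "summable (\<lambda>n::nat. exp (- (25/64) * real n ^ 2))" "(\<Sum>n. exp (- (25/64) * real n ^ 2)) \<le> A / (1 - r)"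
    using geom_dom[of "\<lambda>n. exp (- (25/64) * real n ^ 2)" A r] d r1 by auto
  show "summable (\<lambda>n::nat. exp (- (25/64) * real n ^ 2))" by (rule g(1))
  have A1: "A \<le> 1 + 25/64 + (25/64)^2" unfolding A_def by (rule exp_bound) auto
  have r2: "r \<le> 1 / T8 (25/32)" unfolding r_def by (rule exp_neg_le_T8) simp
  have "A / (1 - r) \<le> (1 + 25/64 + (25/64)^2) / (1 - 1 / T8 (25/32))"
  proof (rule frac_le)
    show "0 \<le> 1 + 25/64 + (25/64::real)^2" by simp
    show "0 < 1 - 1 / T8 (25 / 32)" by (simp add: T8_def power_divide)
    show "1 - 1 / T8 (25 / 32) \<le> 1 - r" using r2 by simp
  qed (use A1 in simp)
  also have "\<dots> \<le> 3" by (simp add: T8_def power_divide)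
  finally show "(\<Sum>n. exp (- (25/64) * real n ^ 2)) \<le> 3" using g(2) by simp
qed

lemma part1_1d:
  fixes x h c :: real
  assumes c: "25/64 \<le> c" and h: "0 < h" "h < 1"
  defines "g \<equiv> (\<lambda>k::int. exp (- c * (x + real_of_int k / h)^2))"
  shows "g summable_on UNIV" and "infsum g UNIV \<le> 3"
    and "\<bar>x\<bar> \<le> 1 \<Longrightarrow> infsum g {k. k \<noteq> 0} \<le> 6 * exp (- c * (1/h - 1)^2)"
proof -
  have gnn: "0 \<le> g k" for k unfolding g_def by simp
  define k0 where "k0 = \<lceil>- x * h\<rceil>"
  define a where "a = x + real_of_int k0 / h"
  define b where "b = 1/h - a"
  have "- x * h \<le> real_of_int k0" unfolding k0_def by simp
  then have a0: "0 \<le> a" unfolding a_def using h by (simp add: field_simps)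
  have "real_of_int k0 < - x * h + 1" unfolding k0_def by linarith
  then have b0: "0 \<le> b" unfolding b_def a_def using h by (simp add: field_simps)
  have ab: "1 \<le> a + b" unfolding b_def using h by (simp add: field_simps)
  have g1: "g (k0 + int n) = exp (- c * (a + real n / h)^2)" for n
    unfolding g_def a_def by (simp add: add_divide_distrib algebra_simps)
  have g2: "g (k0 - 1 - int n) = exp (- c * (b + real n / h)^2)" for n
  proof -
    have eqX: "x + real_of_int (k0 - 1 - int n) / h = - (b + real n / h)"
      unfolding b_def a_def using h by (simp add: field_simps)
    show ?thesis unfolding g_def eqX power2_minus ..
  qed
  have ha: "summable (\<lambda>n. g (k0 + int n))" "(\<Sum>n. g (k0 + int n)) \<le> (\<Sum>n<4. U (a + real n)) + 0.0025"
    unfolding g1 using half_sum[OF c h(1) _ a0] h by auto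
  have hb: "summable (\<lambda>n. g (k0 - 1 - int n))" "(\<Sum>n. g (k0 - 1 - int n)) \<le> (\<Sum>n<4. U (b + real n)) + 0.0025"
    unfolding g2 using half_sum[OF c h(1) _ b0] h by auto
  have hs: "(g has_sum ((\<Sum>n. g (k0 + int n)) + (\<Sum>n. g (k0 - 1 - int n)))) ({k0..} \<union> {..k0-1})"
    by (rule int_two_sided[OF gnn _ ha(1) hb(1)]) simp
  have UN: "{k0..} \<union> {..k0-1} = UNIV" by auto
  show "g summable_on UNIV" using hs UN by (auto simp: summable_on_def)
  have "infsum g UNIV = (\<Sum>n. g (k0 + int n)) + (\<Sum>n. g (k0 - 1 - int n))"
    using hs UN by (simp add: infsumI)
  also have "\<dots> \<le> ((\<Sum>n<4. U (a + real n)) + (\<Sum>n<4. U (b + real n))) + 0.005"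
    using ha(2) hb(2) by simp
  also have "\<dots> \<le> 3" using U_grid2[OF a0 b0 ab] by simp
  finally show "infsum g UNIV \<le> 3" .
  assume x: "\<bar>x\<bar> \<le> 1"
  define E where "E = exp (- c * (1/h - 1)^2)"
  define v where "v = (\<lambda>n::nat. exp (- (25/64) * real n ^ 2))"
  have h1: "0 \<le> 1/h - 1" using h by (simp add: field_simps)
  have key: "exp (- c * y^2) \<le> E * v n" if y: "1/h - 1 + real n \<le> y" for y n
  proof -
    have "0 \<le> 2 * (1/h - 1) * real n" using h1 by simp
    then have "(1/h - 1)^2 + real n ^ 2 \<le> (1/h - 1 + real n)^2"
      by (simp add: power2_eq_square algebra_simps)
    also have "\<dots> \<le> y^2" using y h1 by (intro power_mono) auto
    finally have i1: "c * ((1/h - 1)^2 + real n ^ 2) \<le> c * y^2"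
      using c by (intro mult_left_mono) auto
    have i2: "(25/64) * real n ^ 2 \<le> c * real n ^ 2"
      using c by (intro mult_right_mono) auto
    have "c * (1/h - 1)^2 + (25/64) * real n ^ 2 \<le> c * y^2"
      using i1 i2 by (simp add: distrib_left)
    then show ?thesis unfolding E_def v_def by (simp add: exp_add[symmetric])
  qed
  have nn: "real n \<le> real n / h" for n
  proof -
    have "h * real n \<le> real n" by (rule mult_left_le_one_le) (use h in auto)
    then show ?thesis using h by (simp add: field_simps)
  qed
  have nh: "1/h - 1 + real n \<le> real (Suc n) / h - 1" for n
  proof -
    have "real (Suc n) / h = 1/h + real n / h" by (simp add: add_divide_distrib)
    then show ?thesis using nn[of n] by linarith
  qed
  have p1: "g (1 + int n) \<le> E * v n" for n
  proof -
    have "1/h - 1 + real n \<le> x + real_of_int (1 + int n) / h"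
      using nh[of n] x by (simp add: add_divide_distrib)
    then show ?thesis unfolding g_def by (rule key)
  qed
  have p2: "g (- 1 - int n) \<le> E * v n" for n
  proof -
    have "1/h - 1 + real n \<le> - (x + real_of_int (- 1 - int n) / h)"
      using nh[of n] x by (simp add: diff_divide_distrib add_divide_distrib)
    then have "exp (- c * (- (x + real_of_int (- 1 - int n) / h))^2) \<le> E * v n" by (rule key)
    then show ?thesis unfolding g_def power2_minus .
  qed
  have vs: "summable (\<lambda>n. E * v n)" unfolding v_def by (intro summable_mult v_sum(1))
  have s1: "summable (\<lambda>n. g (1 + int n))" by (rule summable_comparison_test'[OF vs]) (use p1 gnn in auto)
  have s2: "summable (\<lambda>n. g (- 1 - int n))" by (rule summable_comparison_test'[OF vs]) (use p2 gnn in auto)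
  have hs2: "(g has_sum ((\<Sum>n. g (1 + int n)) + (\<Sum>n. g (- 1 - int n)))) ({1..} \<union> {..-1})"
    by (rule int_two_sided[OF gnn _ s1 s2]) simp
  have UN2: "{1..} \<union> {..-1} = {k::int. k \<noteq> 0}" by auto
  have "infsum g {k. k \<noteq> 0} = (\<Sum>n. g (1 + int n)) + (\<Sum>n. g (- 1 - int n))"
    using hs2 UN2 by (simp add: infsumI)
  also have "\<dots> \<le> (\<Sum>n. E * v n) + (\<Sum>n. E * v n)"
    by (intro add_mono suminf_le s1 s2 vs p1 p2)
  also have "\<dots> \<le> 6 * E"
  proof -
    have "(\<Sum>n. E * v n) = E * (\<Sum>n. v n)" unfolding v_def by (intro suminf_mult v_sum(1))
    also have "\<dots> \<le> E * 3" unfolding v_def using v_sum(2) by (intro mult_left_mono) (auto simp: E_def)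
    finally show ?thesis by simp
  qed
  finally show "infsum g {k. k \<noteq> 0} \<le> 6 * exp (- c * (1/h - 1)^2)" unfolding E_def .
qed

lemma sqrt2_le: "sqrt 2 \<le> 3/2"
  by (rule real_le_lsqrt) (auto simp: power2_eq_square)

lemma q_bound:
  fixes a :: real
  assumes a: "0 < a" and \<beta>: "a * sqrt (2/pi) \<le> 2 * sqrt 2"
  shows "\<exists>Q. 0 \<le> Q \<and> summable (\<lambda>n::nat. exp (- 2 * a^2 * (real n + 1)^2))
          \<and> (\<Sum>n. exp (- 2 * a^2 * (real n + 1)^2)) \<le> Q \<and> a * sqrt (2/pi) * (1 + 2*Q) \<le> 4"
proof (cases "1 \<le> a")
  case True
  define r where "r = exp (- 2 * a^2)"
  have r0: "0 \<le> r" "r < 1" unfolding r_def using a by auto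
  have d: "exp (- 2 * a^2 * (real n + 1)^2) \<le> r * r^n" for n
  proof -
    have "real n + 1 \<le> (real n + 1)^2" by (simp add: power2_eq_square)
    then have "2 * a^2 * (real n + 1) \<le> 2 * a^2 * (real n + 1)^2" by (intro mult_left_mono) auto
    then have "exp (- 2 * a^2 * (real n + 1)^2) \<le> exp (- 2 * a^2 * (real n + 1))" by simp
    also have "\<dots> = r * r^n"
    proof -
      have "exp (- 2 * a^2 * (real n + 1)) = exp (- 2 * a^2) ^ (Suc n)"
        by (metis exp_of_nat_mult mult.commute of_nat_Suc add.commute)
      then show ?thesis unfolding r_def by simp
    qed
    finally show ?thesis .
  qed
  have g: "summable (\<lambda>n::nat. exp (- 2 * a^2 * (real n + 1)^2))" "(\<Sum>n. exp (- 2 * a^2 * (real n + 1)^2)) \<le> r / (1 - r)"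
    using geom_dom[of "\<lambda>n. exp (- 2 * a^2 * (real n + 1)^2)" r r] d r0 by auto
  have r1: "r \<le> 1/7"
  proof -
    have "1 * 1 \<le> a * a" using True by (intro mult_mono) auto
    then have "r \<le> exp (- 2)" unfolding r_def by (simp add: power2_eq_square)
    also have "\<dots> \<le> 1 / T8 2" by (rule exp_neg_le_T8) simp
    also have "\<dots> \<le> 1/7" by (simp add: T8_def)
    finally show ?thesis .
  qed
  have Q: "r / (1 - r) \<le> 1/6" using r1 r0 by (simp add: field_simps)
  have "a * sqrt (2/pi) * (1 + 2 * (r / (1 - r))) \<le> 2 * sqrt 2 * (1 + 2 * (1/6))"
    by (rule mult_mono[OF \<beta>]) (use Q r0 in \<open>auto simp: divide_nonneg_nonneg\<close>)
  also have "\<dots> \<le> 4" using sqrt2_le by simp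
  finally show ?thesis using g r0 by (intro exI[of _ "r / (1 - r)"]) (auto simp: divide_nonneg_nonneg)
next
  case False
  define A where "A = exp (1/2 - 2 * a)"
  define r where "r = exp (- 2 * a)"
  have r0: "0 \<le> r" "r < 1" unfolding r_def using a by auto
  have d: "exp (- 2 * a^2 * (real n + 1)^2) \<le> A * r^n" for n
  proof -
    have sq: "0 \<le> (2 * a * N - 1)^2 \<Longrightarrow> 2 * a * N - 1/2 \<le> 2 * a^2 * N^2" for N :: real
      by (simp add: power2_eq_square algebra_simps)
    have "2 * a * (real n + 1) - 1/2 \<le> 2 * a^2 * (real n + 1)^2"
      by (rule sq) simp
    then have "exp (- 2 * a^2 * (real n + 1)^2) \<le> exp (1/2 - 2 * a * (real n + 1))" by simp
    also have "\<dots> = A * r^n"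
    proof -
      have "exp (- 2 * a * real n) = exp (- 2 * a) ^ n"
        by (metis exp_of_nat_mult mult.commute)
      moreover have "1/2 - 2 * a * (real n + 1) = (1/2 - 2*a) + (- 2 * a * real n)" by (simp add: algebra_simps)
      ultimately show ?thesis unfolding A_def r_def by (simp only: exp_add)
    qed
    finally show ?thesis .
  qed
  have g: "summable (\<lambda>n::nat. exp (- 2 * a^2 * (real n + 1)^2))" "(\<Sum>n. exp (- 2 * a^2 * (real n + 1)^2)) \<le> A / (1 - r)"
    using geom_dom[of "\<lambda>n. exp (- 2 * a^2 * (real n + 1)^2)" A r] d r0 by auto
  have e12: "exp (1/2::real) \<le> 2" using exp_bound[of "1/2::real"] by (simp add: power2_eq_square)
  have Aeq: "A / (1 - r) = exp (1/2) / (exp (2*a) - 1)"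
  proof -
    have A1: "A = exp (1/2) * r" unfolding A_def r_def by (simp add: exp_add[symmetric])
    have E: "exp (2*a) = 1 / r" unfolding r_def by (simp add: exp_minus field_simps)
    have rr: "0 < r" "r < 1" using r0 unfolding r_def by auto
    have E2: "1 / r - 1 = (1 - r) / r" using rr by (simp add: field_simps)
    show ?thesis unfolding A1 E E2 using rr by (simp add: field_simps)
  qed
  have QA: "A / (1 - r) \<le> exp (1/2) / (2 * a)"
  proof -
    have "2 * a \<le> exp (2 * a) - 1" using exp_ge_add_one_self[of "2*a"] by linarith
    then show ?thesis unfolding Aeq using a by (intro divide_left_mono) auto
  qed
  have sp: "sqrt (2/pi) \<le> 1" using pi_gt3 by simp
  have b1: "a * sqrt (2/pi) \<le> 1" using False sp a by (simp add: mult_le_one)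
  have "a * sqrt (2/pi) * (A / (1 - r)) \<le> a * 1 * (exp (1/2) / (2 * a))"
    using sp QA a r0 by (intro mult_mono) (auto simp: A_def)
  also have "\<dots> \<le> 1" using a e12 by (simp add: field_simps)
  finally have "a * sqrt (2/pi) * (A / (1 - r)) \<le> 1" .
  moreover have "B * Qv \<le> 1 \<Longrightarrow> B \<le> 1 \<Longrightarrow> B * (1 + 2 * Qv) \<le> 4" for B Qv :: real
    by (simp add: distrib_left)
  ultimately have "a * sqrt (2/pi) * (1 + 2 * (A / (1 - r))) \<le> 4" using b1 by blast
  then show ?thesis using g r0 by (intro exI[of _ "A / (1 - r)"]) (auto simp: A_def)
qed

lemma part2_1d:
  fixes a :: real and m :: nat
  assumes a: "0 < a" and \<beta>: "a * sqrt (2/pi) \<le> 2 * sqrt 2"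
  defines "w \<equiv> (\<lambda>k::int. exp (- 2 * a^2 * (real_of_int k)^2))"
  shows "w summable_on UNIV"
    and "\<exists>Q. 0 \<le> Q \<and> infsum w UNIV \<le> 1 + 2 * Q \<and> infsum w {k. int m < \<bar>k\<bar>} \<le> 2 * exp (- 2 * a^2 * (real m)^2) * Q
           \<and> a * sqrt (2/pi) * (1 + 2 * Q) \<le> 4"
proof -
  obtain Q where Q: "0 \<le> Q" "summable (\<lambda>n::nat. exp (- 2 * a^2 * (real n + 1)^2))"
     "(\<Sum>n. exp (- 2 * a^2 * (real n + 1)^2)) \<le> Q" "a * sqrt (2/pi) * (1 + 2*Q) \<le> 4"
    using q_bound[OF a \<beta>] by blast
  define q where "q = (\<lambda>n::nat. exp (- 2 * a^2 * (real n + 1)^2))"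
  have wnn: "0 \<le> w k" for k unfolding w_def by simp
  have w1: "w (int (Suc n)) = q n" for n unfolding w_def q_def by simp
  have w2: "w (- 1 - int n) = q n" for n
  proof -
    have "(real_of_int (- 1 - int n))^2 = (real n + 1)^2" by (simp add: power2_eq_square algebra_simps)
    then show ?thesis unfolding w_def q_def by simp
  qed
  have qs: "summable q" using Q(2) unfolding q_def .
  have s1: "summable (\<lambda>n. w (0 + int n))"
    using qs w1 by (subst summable_Suc_iff[symmetric]) simp
  have s2: "summable (\<lambda>n. w (- 1 - int n))" using qs w2 by simp
  have hs: "(w has_sum ((\<Sum>n. w (0 + int n)) + (\<Sum>n. w (- 1 - int n)))) ({0..} \<union> {..-1})"
    by (rule int_two_sided[OF wnn _ s1 s2]) simp
  have UN: "{0..} \<union> {..-1::int} = UNIV" by auto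
  show "w summable_on UNIV" using hs UN by (auto simp: summable_on_def)
  have "infsum w UNIV = (\<Sum>n. w (0 + int n)) + (\<Sum>n. w (- 1 - int n))"
    using hs UN by (simp add: infsumI)
  also have "(\<Sum>n. w (0 + int n)) = (\<Sum>n. w (0 + int (Suc n))) + w 0"
    using suminf_split_head[OF s1] by simp
  also have "w 0 = 1" unfolding w_def by simp
  finally have i1: "infsum w UNIV \<le> 1 + 2 * Q"
    using w1 w2 Q(3) unfolding q_def[symmetric] by simp
  define E where "E = exp (- 2 * a^2 * (real m)^2)"
  have key: "w k \<le> E * q n" if "real m + real n + 1 \<le> \<bar>real_of_int k\<bar>" for k n
  proof -
    have "(real m)^2 + (real n + 1)^2 \<le> (real m + real n + 1)^2"
      by (simp add: power2_eq_square algebra_simps)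
    also have "\<dots> \<le> (real_of_int k)^2" using that
      by (metis abs_le_square_iff abs_of_nonneg add_nonneg_nonneg of_nat_0_le_iff zero_le_one)
    finally have "2 * a^2 * ((real m)^2 + (real n + 1)^2) \<le> 2 * a^2 * (real_of_int k)^2"
      by (intro mult_left_mono) auto
    then show ?thesis unfolding w_def E_def q_def by (simp add: exp_add[symmetric] algebra_simps)
  qed
  have qs2: "summable (\<lambda>n. E * q n)" by (intro summable_mult qs)
  have t1: "w (int m + 1 + int n) \<le> E * q n" for n by (rule key) simp
  have t2: "w (- int m - 1 - int n) \<le> E * q n" for n by (rule key) simp
  have ts1: "summable (\<lambda>n. w (int m + 1 + int n))" by (rule summable_comparison_test'[OF qs2]) (use t1 wnn in auto)
  have ts2: "summable (\<lambda>n. w (- int m - 1 - int n))" by (rule summable_comparison_test'[OF qs2]) (use t2 wnn in auto)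
  have hs2: "(w has_sum ((\<Sum>n. w (int m + 1 + int n)) + (\<Sum>n. w (- int m - 1 - int n)))) ({int m + 1..} \<union> {..- int m - 1})"
    by (rule int_two_sided[OF wnn _ ts1 ts2]) simp
  have UN2: "{int m + 1..} \<union> {..- int m - 1} = {k. int m < \<bar>k\<bar>}" by auto
  have "infsum w {k. int m < \<bar>k\<bar>} = (\<Sum>n. w (int m + 1 + int n)) + (\<Sum>n. w (- int m - 1 - int n))"
    using hs2 UN2 by (simp add: infsumI)
  also have "\<dots> \<le> (\<Sum>n. E * q n) + (\<Sum>n. E * q n)"
    by (intro add_mono suminf_le ts1 ts2 qs2 t1 t2)
  also have "(\<Sum>n. E * q n) = E * (\<Sum>n. q n)" by (intro suminf_mult qs)
  also have "E * (\<Sum>n. q n) \<le> E * Q" using Q(3) unfolding q_def[symmetric] by (intro mult_left_mono) (auto simp: E_def)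
  finally have i2: "infsum w {k. int m < \<bar>k\<bar>} \<le> 2 * E * Q" by simp
  show "\<exists>Q. 0 \<le> Q \<and> infsum w UNIV \<le> 1 + 2 * Q \<and> infsum w {k. int m < \<bar>k\<bar>} \<le> 2 * exp (- 2 * a^2 * (real m)^2) * Q
           \<and> a * sqrt (2/pi) * (1 + 2 * Q) \<le> 4"
    using Q(1,4) i1 i2 unfolding E_def by blast
qed

lemma c_bound:
  assumes hl: "0 < l" "l \<le> 2 / sqrt pi"
  shows "25/64 \<le> 1 / (2 * l^2)"
proof -
  have "l^2 \<le> (2 / sqrt pi)^2" using hl by (intro power_mono) auto
  also have "\<dots> = 4 / pi" by (simp add: power_divide)
  finally have "2 * l^2 \<le> 8 / pi" by simp
  then have "1 / (8 / pi) \<le> 1 / (2 * l^2)" using hl by (intro divide_left_mono) auto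
  moreover have "25/64 \<le> 1 / (8 / pi)" using pi_approx(1) by simp
  ultimately show ?thesis by linarith
qed

lemma kernel_prod:
  fixes x :: "real ^ 'n" and n :: "int ^ 'n"
  shows "sq_exp_kernel l (x + (1 / h) *\<^sub>R lat n) =
    (\<Prod>i\<in>UNIV. exp (- (1 / (2 * l^2)) * (x $ i + real_of_int (n $ i) / h)^2))"
proof -
  have "(norm (x + (1 / h) *\<^sub>R lat n))^2 = (\<Sum>i\<in>UNIV. (x $ i + real_of_int (n $ i) / h)^2)"
    unfolding power2_norm_eq_inner inner_vec_def by (simp add: lat_def power2_eq_square)
  then show ?thesis unfolding sq_exp_kernel_def
    by (simp add: exp_sum[symmetric] sum_divide_distrib sum_negf sum_distrib_left)
qed

lemma card_ge1: "1 \<le> CARD('n::finite)"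
  using finite_UNIV_card_ge_0[where 'a='n] by simp

lemma part1:
  fixes l h :: real and x :: "real ^ 'n"
  assumes hl: "0 < l" "l \<le> 2 / sqrt pi" and hh: "0 < h" "h < 1"
    and x: "\<forall>i. \<bar>x $ i\<bar> \<le> 1"
  shows "((\<lambda>n. sq_exp_kernel l (x + (1 / h) *\<^sub>R lat n)) summable_on {n :: int ^ 'n. n \<noteq> 0}) \<and>
            \<bar>\<Sum>\<^sub>\<infinity>n\<in>{n :: int ^ 'n. n \<noteq> 0}. sq_exp_kernel l (x + (1 / h) *\<^sub>R lat n)\<bar>
              \<le> 2 * real CARD('n) * 3 ^ CARD('n) * exp (- (1/2) * ((1/h - 1) / l)^2)"
proof -
  define c where "c = 1 / (2 * l^2)"
  have c: "25/64 \<le> c" unfolding c_def by (rule c_bound[OF hl])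
  define g where "g = (\<lambda>i (k::int). exp (- c * (x $ i + real_of_int k / h)^2))"
  define E where "E = exp (- c * (1/h - 1)^2)"
  have keq: "sq_exp_kernel l (x + (1 / h) *\<^sub>R lat n) = (\<Prod>i\<in>UNIV. g i (n $ i))" for n
    unfolding kernel_prod g_def c_def ..
  have gnn: "0 \<le> g i k" for i k unfolding g_def by simp
  have gs: "g i summable_on UNIV" for i unfolding g_def by (rule part1_1d(1)[OF c hh])
  have gF: "infsum (g i) UNIV \<le> 3" for i unfolding g_def by (rule part1_1d(2)[OF c hh])
  have gT: "infsum (g i) {k. k \<noteq> 0} \<le> 6 * E" for i
    unfolding g_def E_def by (rule part1_1d(3)[OF c hh]) (use x in auto)
  have S: "{n :: int ^ 'n. n \<noteq> 0} = {n. \<exists>i. n $ i \<in> {k. k \<noteq> 0}}"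
    by (auto simp: vec_eq_iff)
  have sm: "(\<lambda>n. \<Prod>i\<in>UNIV. g i (n $ i)) summable_on {n :: int ^ 'n. n \<noteq> 0}"
    by (rule prod_vec_cover(1)[OF gnn gs gT gF])
  have bd: "infsum (\<lambda>n. \<Prod>i\<in>UNIV. g i (n $ i)) {n :: int ^ 'n. n \<noteq> 0} \<le> real CARD('n) * (6 * E) * 3 ^ (CARD('n) - 1)"
    unfolding S by (rule prod_vec_cover(2)[OF gnn gs gT gF])
  have nn: "0 \<le> infsum (\<lambda>n. \<Prod>i\<in>UNIV. g i (n $ i)) {n :: int ^ 'n. n \<noteq> 0}"
    by (intro infsum_nonneg prod_nonneg gnn)
  have p3: "(3::real) ^ CARD('n) = 3 * 3 ^ (CARD('n) - 1)"
    using card_ge1[where 'n='n] by (metis Suc_diff_le diff_Suc_1 power_Suc)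
  have Eeq: "exp (- (1/2) * ((1/h - 1) / l)^2) = E"
    unfolding E_def c_def by (simp add: power_divide)
  have "real CARD('n) * (6 * E) * 3 ^ (CARD('n) - 1) = 2 * real CARD('n) * 3 ^ CARD('n) * E"
    unfolding p3 by (simp add: algebra_simps)
  note eq = this
  show ?thesis unfolding keq Eeq abs_of_nonneg[OF nn] using sm bd[unfolded eq] by blast
qed

lemma part2:
  fixes l h :: real and x :: "real ^ 'n" and m :: nat
  assumes hl: "0 < l" "l \<le> 2 / sqrt pi" and hh: "0 < h" "h < 1"
  shows "((\<lambda>j. fourier_tr (sq_exp_kernel l) (h *\<^sub>R lat j) * exp (2 * pi * \<i> * complex_of_real (h * (lat j \<bullet> x))))
               summable_on (- Jset m)) \<and>
            norm (complex_of_real (h ^ CARD('n)) *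
              (\<Sum>\<^sub>\<infinity>j\<in>(- Jset m). fourier_tr (sq_exp_kernel l) (h *\<^sub>R lat j) * exp (2 * pi * \<i> * complex_of_real (h * (lat j \<bullet> x)))))
              \<le> 2 * real CARD('n) * 4 ^ CARD('n) * exp (- 2 * (pi * l * h * real m)^2)"
proof -
  define a where "a = pi * l * h"
  define C where "C = sqrt (2*pi) * l"
  define \<beta> where "\<beta> = a * sqrt (2/pi)"
  define d where "d = CARD('n)"
  have a0: "0 < a" unfolding a_def using hl hh by simp
  have \<beta>eq: "\<beta> = h * C"
  proof -
    have "sqrt (2*pi) = sqrt ((2/pi) * (pi*pi))" by (simp add: field_simps)
    also have "\<dots> = sqrt (2/pi) * pi" by (simp only: real_sqrt_mult real_sqrt_mult_self abs_of_pos[OF pi_gt_zero])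
    finally have "sqrt (2/pi) * pi = sqrt (2*pi)" by simp
    then show ?thesis unfolding \<beta>_def a_def C_def by (simp add: algebra_simps)
  qed
  have \<beta>0: "0 \<le> \<beta>" unfolding \<beta>_def using a0 by simp
  have \<beta>b: "a * sqrt (2/pi) \<le> 2 * sqrt 2"
  proof -
    have "h * C \<le> 1 * (sqrt (2*pi) * (2 / sqrt pi))" unfolding C_def
      using hh hl by (intro mult_mono) auto
    also have "\<dots> = 2 * sqrt 2" by (simp add: real_sqrt_mult field_simps)
    finally show ?thesis using \<beta>eq unfolding \<beta>_def by simp
  qed
  define w where "w = (\<lambda>k::int. exp (- 2 * a^2 * (real_of_int k)^2))"
  define E2 where "E2 = exp (- 2 * a^2 * (real m)^2)"
  have ws: "w summable_on UNIV" unfolding w_def by (rule part2_1d(1)[OF a0 \<beta>b])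
  obtain Q where Q: "0 \<le> Q" "infsum w UNIV \<le> 1 + 2 * Q" "infsum w {k. int m < \<bar>k\<bar>} \<le> 2 * E2 * Q"
      "\<beta> * (1 + 2 * Q) \<le> 4"
    using part2_1d(2)[OF a0 \<beta>b, of m] unfolding w_def[symmetric] E2_def \<beta>_def by blast
  define F where "F = (\<lambda>j::int^'n. fourier_tr (sq_exp_kernel l) (h *\<^sub>R lat j) * exp (2 * pi * \<i> * complex_of_real (h * (lat j \<bullet> x))))"
  have wnn: "0 \<le> w k" for k unfolding w_def by simp
  have nF: "norm (F j) = C ^ d * (\<Prod>i\<in>UNIV. w (j $ i))" for j
  proof -
    have n2: "(norm (h *\<^sub>R lat j))^2 = (\<Sum>i\<in>UNIV. (h * real_of_int (j $ i))^2)"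
      unfolding power2_norm_eq_inner inner_vec_def by (simp add: lat_def power2_eq_square)
    have pe: "exp (- 2 * pi^2 * l^2 * (norm (h *\<^sub>R lat j))^2) = (\<Prod>i\<in>UNIV. w (j $ i))"
      unfolding n2 w_def a_def
      by (simp add: exp_sum[symmetric] sum_distrib_left power_mult_distrib algebra_simps)
    have e1: "norm (exp (2 * pi * \<i> * complex_of_real (h * (lat j \<bullet> x)))) = 1"
      by (simp add: norm_exp_eq_Re)
    have p0: "(sqrt (2*pi) * l) ^ CARD('n) * (\<Prod>i\<in>UNIV. w (j $ i)) \<ge> 0" using hl by (intro mult_nonneg_nonneg prod_nonneg wnn) auto
    have "norm (F j) = norm (complex_of_real ((sqrt (2*pi) * l) ^ CARD('n) * (\<Prod>i\<in>UNIV. w (j $ i))))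
        * norm (exp (2 * pi * \<i> * complex_of_real (h * (lat j \<bullet> x))))"
      unfolding F_def fourier_sq_exp[OF hl(1)] pe by (rule norm_mult)
    then show ?thesis unfolding e1 norm_of_real abs_of_nonneg[OF p0] C_def d_def by simp
  qed
  have S: "- Jset m = {j :: int ^ 'n. \<exists>i. j $ i \<in> {k. int m < \<bar>k\<bar>}}"
    by (auto simp: Jset_def not_le) (meson not_le)
  define J where "J = (- Jset m :: (int^'n) set)"
  have tau: "infsum w {k. int m < \<bar>k\<bar>} \<le> 2 * E2 * Q" by (rule Q(3))
  have phi: "infsum w UNIV \<le> 1 + 2 * Q" by (rule Q(2))
  have ps: "(\<lambda>j. \<Prod>i\<in>UNIV. w (j $ i)) summable_on J"
    by (rule prod_vec_cover(1)[OF wnn ws tau phi])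
  have pb: "infsum (\<lambda>j. \<Prod>i\<in>UNIV. w (j $ i)) J \<le> real d * (2 * E2 * Q) * (1 + 2 * Q) ^ (d - 1)"
  proof -
    have "infsum (\<lambda>j. \<Prod>i\<in>UNIV. w (j $ i)) {j :: int ^ 'n. \<exists>i. j $ i \<in> {k. int m < \<bar>k\<bar>}}
       \<le> real CARD('n) * (2 * E2 * Q) * (1 + 2 * Q) ^ (CARD('n) - 1)"
      by (rule prod_vec_cover(2)[OF wnn ws tau phi])
    then show ?thesis unfolding J_def S d_def .
  qed
  have ns: "(\<lambda>j. norm (F j)) summable_on J"
    unfolding nF by (intro summable_on_cmult_right ps)
  then have Fs: "F summable_on J" by (rule abs_summable_summable)
  have "norm (complex_of_real (h ^ d) * infsum F J) = h ^ d * norm (infsum F J)"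
    using hh unfolding norm_mult norm_of_real by simp
  also have "\<dots> \<le> h ^ d * infsum (\<lambda>j. norm (F j)) J"
    using hh by (intro mult_left_mono norm_infsum_bound ns) auto
  also have "infsum (\<lambda>j. norm (F j)) J = C ^ d * infsum (\<lambda>j. \<Prod>i\<in>UNIV. w (j $ i)) J"
    unfolding nF by (simp add: infsum_cmult_right')
  also have "h ^ d * (C ^ d * infsum (\<lambda>j. \<Prod>i\<in>UNIV. w (j $ i)) J)
      \<le> h ^ d * (C ^ d * (real d * (2 * E2 * Q) * (1 + 2 * Q) ^ (d - 1)))"
    using hh hl by (intro mult_left_mono pb) (auto simp: C_def)
  also have "\<dots> = real d * E2 * (2 * \<beta> * Q) * (\<beta> * (1 + 2 * Q)) ^ (d - 1)"
  proof -
    have d1: "d = Suc (d - 1)" using card_ge1[where 'n='n] unfolding d_def by simp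
    have hC: "h ^ d * C ^ d = \<beta> * \<beta> ^ (d - 1)" unfolding \<beta>eq power_mult_distrib[symmetric]
      by (subst d1) simp
    define Y where "Y = real d * (2 * E2 * Q) * (1 + 2 * Q) ^ (d - 1)"
    have "h ^ d * (C ^ d * Y) = (h ^ d * C ^ d) * Y" by (simp only: mult.assoc)
    also have "\<dots> = \<beta> * \<beta> ^ (d - 1) * Y" by (simp only: hC)
    also have "\<dots> = real d * E2 * (2 * \<beta> * Q) * (\<beta> * (1 + 2 * Q)) ^ (d - 1)"
      unfolding Y_def power_mult_distrib by (simp add: mult_ac)
    finally show ?thesis unfolding Y_def .
  qed
  also have "\<dots> \<le> real d * E2 * 4 * 4 ^ (d - 1)"
  proof -
    have "2 * \<beta> * Q \<le> 4" using Q(4) \<beta>0 Q(1) by (simp add: algebra_simps)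
    moreover have "(\<beta> * (1 + 2 * Q)) ^ (d - 1) \<le> 4 ^ (d - 1)"
      using Q(4) \<beta>0 Q(1) by (intro power_mono) auto
    ultimately show ?thesis using \<beta>0 Q(1)
      by (intro mult_mono mult_left_mono) (auto simp: E2_def)
  qed
  also have "\<dots> \<le> 2 * real d * 4 ^ d * E2"
  proof -
    have d1: "d = Suc (d - 1)" using card_ge1[where 'n='n] unfolding d_def by simp
    have "(4::real) ^ d = 4 * 4 ^ (d - 1)" by (subst d1) simp
    then show ?thesis by (simp add: E2_def)
  qed
  finally have main: "norm (complex_of_real (h ^ d) * infsum F J) \<le> 2 * real d * 4 ^ d * E2" .
  have E2eq: "exp (- 2 * (pi * l * h * real m)^2) = E2"
    unfolding E2_def a_def by (simp add: power_mult_distrib)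
  show ?thesis using Fs[unfolded J_def] main[unfolded J_def] unfolding F_def[symmetric] E2eq d_def by simp
qed

theorem theorem3p2:
  fixes l h :: real
  assumes hl: "0 < l" "l \<le> 2 / sqrt pi"
    and hh: "0 < h" "h < 1"
  shows "(\<forall>x :: real ^ 'n. (\<forall>i. \<bar>x $ i\<bar> \<le> 1) \<longrightarrow>
            ((\<lambda>n. sq_exp_kernel l (x + (1 / h) *\<^sub>R lat n)) summable_on {n :: int ^ 'n. n \<noteq> 0}) \<and>
            \<bar>\<Sum>\<^sub>\<infinity>n\<in>{n :: int ^ 'n. n \<noteq> 0}. sq_exp_kernel l (x + (1 / h) *\<^sub>R lat n)\<bar>
              \<le> 2 * real CARD('n) * 3 ^ CARD('n) * exp (- (1/2) * ((1/h - 1) / l)^2))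
       \<and> (\<forall>(m :: nat) (x :: real ^ 'n).
            ((\<lambda>j. fourier_tr (sq_exp_kernel l) (h *\<^sub>R lat j) * exp (2 * pi * \<i> * complex_of_real (h * (lat j \<bullet> x))))
               summable_on (- Jset m)) \<and>
            norm (complex_of_real (h ^ CARD('n)) *
              (\<Sum>\<^sub>\<infinity>j\<in>(- Jset m). fourier_tr (sq_exp_kernel l) (h *\<^sub>R lat j) * exp (2 * pi * \<i> * complex_of_real (h * (lat j \<bullet> x)))))
              \<le> 2 * real CARD('n) * 4 ^ CARD('n) * exp (- 2 * (pi * l * h * real m)^2))"
  using part1[OF hl hh] part2[OF hl hh] by blast

end
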